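(* Consider the twisted associative algebra generated by an element $\Delta$ of arity $0$ and homological degree $1$, an element $\mathsf m$ of arity $1$ and homological degree $0$, and an element $\mathsf l$ of arity $1$ and homological degree $1$, subject to the relations \[ \Delta^2=0,\quad [\mathsf m_{\{1\}},\mathsf m_{\{2\}}]=0,\quad [\Delta,\mathsf m_{\{1\}}]=\mathsf l_{\{1\}},\quad [\Delta,\mathsf l_{\{1\}}]=0,\quad [\mathsf l_{\{1\}},\mathsf m_{\{2\}}]=0,\quad [\mathsf l_{\{1\}},\mathsf l_{\{2\}}]=0. \] This twisted associative algebra is isomorphic to $\mathrm{tBV}$, the twisted associative algebra generated by $\Delta$ (arity $0$, degree $1$) and $\mathsf m$ (arity $1$, degree $0$) subject to $\Delta^2=0$, $[\mathsf m_{\{1\}},\mathsf m_{\{2\}}]=0$ and $[[\Delta,\mathsf m_{\{1\}}],\mathsf m_{\{2\}}]=0$.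
   Context: Work over a field $\Bbbk$ of characteristic zero, homologically graded vector spaces with the Koszul sign rule. A twisted associative algebra is a species $\mathcal A$ (functor from finite sets with bijections to graded vector spaces) with natural, associative, unital products $\mathcal A(J)\otimes\mathcal A(K)\to\mathcal A(J\sqcup K)$ for disjoint $J,K$; elements of $\mathcal A(I)$ have arity $|I|$. $[\mathsf x,\mathsf y]=\mathsf x\mathsf y-(-1)^{|\mathsf x||\mathsf y|}\mathsf y\mathsf x$. For an arity-one element $\mathsf x$, $\mathsf x_{\{i\}}$ is its relabeling to $\{i\}$. Relations are imposed together with all relabelings. *)

theory Defs
  imports Main
begin

text \<open>Concrete model of twisted associative algebras presented by generators of
arity 0 and 1.  Labels are natural numbers (finite subsets of nat model the finite
sets; bijections of nat model relabelings).  A basis word of arity I of the free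
twisted associative algebra is a list of letters in which every label of I occurs
exactly once.  Elements are finitely supported coefficient functions on words.\<close>

datatype letter = LD | LM nat | LL nat
  \<comment> \<open>LD = Delta (arity 0, degree 1); LM i = m relabelled to {i} (degree 0);
      LL i = l relabelled to {i} (degree 1)\<close>

type_synonym word = "letter list"
type_synonym 'k elt = "word \<Rightarrow> 'k"

fun lab :: "letter \<Rightarrow> nat list" where
  "lab LD = []" | "lab (LM i) = [i]" | "lab (LL i) = [i]"

fun ldeg :: "letter \<Rightarrow> nat" where
  "ldeg LD = 1" | "ldeg (LM i) = 0" | "ldeg (LL i) = 1"

fun relab_letter :: "(nat \<Rightarrow> nat) \<Rightarrow> letter \<Rightarrow> letter" where
  "relab_letter s LD = LD" | "relab_letter s (LM i) = LM (s i)" | "relab_letter s (LL i) = LL (s i)"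

definition labels :: "word \<Rightarrow> nat list" where
  "labels w = concat (map lab w)"

definition wdeg :: "word \<Rightarrow> nat" where
  "wdeg w = sum_list (map ldeg w)"

definition alph1 :: "letter set" where "alph1 = UNIV"
definition alph2 :: "letter set" where "alph2 = insert LD (range LM)"

text \<open>f is an element of A(I) of the free twisted associative algebra on alph\<close>
definition inA :: "letter set \<Rightarrow> nat set \<Rightarrow> 'k::zero elt \<Rightarrow> bool" where
  "inA alph I f \<longleftrightarrow> finite {w. f w \<noteq> 0} \<and>
     (\<forall>w. f w \<noteq> 0 \<longrightarrow> set w \<subseteq> alph \<and> distinct (labels w) \<and> set (labels w) = I)"

definition homdeg :: "nat \<Rightarrow> 'k::zero elt \<Rightarrow> bool" where
  "homdeg d f \<longleftrightarrow> (\<forall>w. f w \<noteq> 0 \<longrightarrow> wdeg w = d)"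

definition mon :: "word \<Rightarrow> 'k::field elt" where
  "mon u = (\<lambda>w. if w = u then 1 else 0)"

definition eadd :: "'k::field elt \<Rightarrow> 'k elt \<Rightarrow> 'k elt" where
  "eadd f g = (\<lambda>w. f w + g w)"

definition esub :: "'k::field elt \<Rightarrow> 'k elt \<Rightarrow> 'k elt" where
  "esub f g = (\<lambda>w. f w - g w)"

definition esmult :: "'k::field \<Rightarrow> 'k elt \<Rightarrow> 'k elt" where
  "esmult c f = (\<lambda>w. c * f w)"

text \<open>product = concatenation of words, extended bilinearly\<close>
definition emult :: "'k::field elt \<Rightarrow> 'k elt \<Rightarrow> 'k elt" where
  "emult f g = (\<lambda>w. \<Sum>k\<le>length w. f (take k w) * g (drop k w))"

definition relabel :: "(nat \<Rightarrow> nat) \<Rightarrow> 'k::field elt \<Rightarrow> 'k elt" where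
  "relabel s f = (\<lambda>w. f (map (relab_letter (inv s)) w))"

definition gcomm :: "'k::field elt \<Rightarrow> nat \<Rightarrow> 'k elt \<Rightarrow> nat \<Rightarrow> 'k elt" where
  "gcomm a da b db = esub (emult a b) (esmult ((-1) ^ (da * db)) (emult b a))"

text \<open>Relations, paired with their arity sets, together with all relabelings.\<close>
definition Rel1 :: "('k::field elt \<times> nat set) set" where
  "Rel1 =
     {(mon [LD, LD], {})}
   \<union> {(gcomm (mon [LM i]) 0 (mon [LM j]) 0, {i, j}) | i j. i \<noteq> j}
   \<union> {(esub (gcomm (mon [LD]) 1 (mon [LM i]) 0) (mon [LL i]), {i}) | i. True}
   \<union> {(gcomm (mon [LD]) 1 (mon [LL i]) 1, {i}) | i. True}
   \<union> {(gcomm (mon [LL i]) 1 (mon [LM j]) 0, {i, j}) | i j. i \<noteq> j}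
   \<union> {(gcomm (mon [LL i]) 1 (mon [LL j]) 1, {i, j}) | i j. i \<noteq> j}"

definition Rel2 :: "('k::field elt \<times> nat set) set" where
  "Rel2 =
     {(mon [LD, LD], {})}
   \<union> {(gcomm (mon [LM i]) 0 (mon [LM j]) 0, {i, j}) | i j. i \<noteq> j}
   \<union> {(gcomm (gcomm (mon [LD]) 1 (mon [LM i]) 0) 1 (mon [LM j]) 0, {i, j}) | i j. i \<noteq> j}"

inductive inIdeal :: "letter set \<Rightarrow> ('k::field elt \<times> nat set) set \<Rightarrow> 'k elt \<Rightarrow> bool"
  for alph R where
  zero: "inIdeal alph R (\<lambda>w. 0)"
| add: "inIdeal alph R x \<Longrightarrow> inIdeal alph R y \<Longrightarrow> inIdeal alph R (eadd x y)"
| smult: "inIdeal alph R x \<Longrightarrow> inIdeal alph R (esmult c x)"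
| gen: "(r, S) \<in> R \<Longrightarrow> set u \<subseteq> alph \<Longrightarrow> set v \<subseteq> alph \<Longrightarrow>
        distinct (labels u @ labels v) \<Longrightarrow> set (labels u @ labels v) \<inter> S = {} \<Longrightarrow>
        inIdeal alph R (emult (emult (mon u) r) (mon v))"

definition taa_morphism :: "letter set \<Rightarrow> letter set \<Rightarrow> ('k::field elt \<Rightarrow> 'k elt) \<Rightarrow> bool" where
  "taa_morphism A B F \<longleftrightarrow>
     (\<forall>I f. finite I \<longrightarrow> inA A I f \<longrightarrow> inA B I (F f))
   \<and> (\<forall>I f g. inA A I f \<longrightarrow> inA A I g \<longrightarrow> F (eadd f g) = eadd (F f) (F g))
   \<and> (\<forall>I c f. inA A I f \<longrightarrow> F (esmult c f) = esmult c (F f))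
   \<and> (\<forall>I J f g. I \<inter> J = {} \<longrightarrow> inA A I f \<longrightarrow> inA A J g \<longrightarrow> F (emult f g) = emult (F f) (F g))
   \<and> F (mon []) = mon []
   \<and> (\<forall>s I f. bij s \<longrightarrow> inA A I f \<longrightarrow> F (relabel s f) = relabel s (F f))
   \<and> (\<forall>I d f. inA A I f \<longrightarrow> homdeg d f \<longrightarrow> homdeg d (F f))"

text \<open>The quotients Free(A)/Ideal(R) and Free(B)/Ideal(S) are isomorphic twisted associative
  algebras: there are morphisms between the free algebras preserving the ideals whose
  composites are the identity modulo the ideals.\<close>
definition taa_quot_iso :: "letter set \<Rightarrow> ('k::field elt \<times> nat set) set \<Rightarrow>
    letter set \<Rightarrow> ('k elt \<times> nat set) set \<Rightarrow> bool" where
  "taa_quot_iso A R B S \<longleftrightarrow> (\<exists>F G.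
     taa_morphism A B F \<and> taa_morphism B A G
   \<and> (\<forall>I x. finite I \<longrightarrow> inA A I x \<longrightarrow> inIdeal A R x \<longrightarrow> inIdeal B S (F x))
   \<and> (\<forall>I y. finite I \<longrightarrow> inA B I y \<longrightarrow> inIdeal B S y \<longrightarrow> inIdeal A R (G y))
   \<and> (\<forall>I x. finite I \<longrightarrow> inA A I x \<longrightarrow> inIdeal A R (esub (G (F x)) x))
   \<and> (\<forall>I y. finite I \<longrightarrow> inA B I y \<longrightarrow> inIdeal B S (esub (F (G y)) y)))"

end

theory Submission
  imports Defs
begin

definition supp :: "'k::zero elt \<Rightarrow> word set" where "supp f = {w. f w \<noteq> 0}"

definition splits :: "word \<Rightarrow> (word \<times> word) set" where "splits w = {(a,b). a @ b = w}"
definition splits3 :: "word \<Rightarrow> (word \<times> word \<times> word) set" where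
  "splits3 w = {(a,b,c). a @ b @ c = w}"

lemma splits_eq: "splits w = (\<lambda>k. (take k w, drop k w)) ` {..length w}"
proof (rule set_eqI, rule iffI)
  fix p assume "p \<in> splits w"
  then obtain a b where p: "p = (a,b)" "a @ b = w" by (auto simp: splits_def)
  then show "p \<in> (\<lambda>k. (take k w, drop k w)) ` {..length w}"
    by (intro image_eqI[of _ _ "length a"]) auto
qed (auto simp: splits_def)

lemma finite_splits[simp]: "finite (splits w)" by (simp add: splits_eq)

lemma emult_splits: "emult f g w = (\<Sum>(a,b)\<in>splits w. f a * g b)"
proof -
  have "inj_on (\<lambda>k. (take k w, drop k w)) {..length w}"
    by (auto simp: inj_on_def) (metis min_absorb2 length_take)
  then show ?thesis unfolding emult_def splits_eq by (simp add: sum.reindex)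
qed

lemma emult_assoc_l: "emult (emult f g) h w = (\<Sum>(a,b,c)\<in>splits3 w. f a * g b * h c)"
proof -
  have "emult (emult f g) h w = (\<Sum>p\<in>splits w. \<Sum>q\<in>splits (fst p). f (fst q) * g (snd q) * h (snd p))"
    by (simp add: emult_splits case_prod_beta sum_distrib_right)
  also have "\<dots> = (\<Sum>(p,q)\<in>Sigma (splits w) (\<lambda>p. splits (fst p)). f (fst q) * g (snd q) * h (snd p))"
    by (rule sum.Sigma) auto
  also have "\<dots> = (\<Sum>(a,b,c)\<in>splits3 w. f a * g b * h c)"
    by (rule sum.reindex_bij_witness[where i="\<lambda>(a,b,c). ((a@b,c),(a,b))" and j="\<lambda>((x,c),(a,b)). (a,b,c)"])
       (auto simp: splits_def splits3_def)
  finally show ?thesis .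
qed

lemma emult_assoc_r: "emult f (emult g h) w = (\<Sum>(a,b,c)\<in>splits3 w. f a * g b * h c)"
proof -
  have "emult f (emult g h) w = (\<Sum>p\<in>splits w. \<Sum>q\<in>splits (snd p). f (fst p) * g (fst q) * h (snd q))"
    by (simp add: emult_splits case_prod_beta sum_distrib_left mult.assoc)
  also have "\<dots> = (\<Sum>(p,q)\<in>Sigma (splits w) (\<lambda>p. splits (snd p)). f (fst p) * g (fst q) * h (snd q))"
    by (rule sum.Sigma) auto
  also have "\<dots> = (\<Sum>(a,b,c)\<in>splits3 w. f a * g b * h c)"
    by (rule sum.reindex_bij_witness[where i="\<lambda>(a,b,c). ((a,b@c),(b,c))" and j="\<lambda>((a,x),(b,c)). (a,b,c)"])
       (auto simp: splits_def splits3_def)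
  finally show ?thesis .
qed

lemma emult_assoc: "emult (emult f g) h = emult f (emult g h)"
  by (rule ext) (simp add: emult_assoc_l emult_assoc_r)

lemma emult_mon_left: "emult (mon u) f w = (if take (length u) w = u then f (drop (length u) w) else 0)"
proof -
  have "emult (mon u) f w = (\<Sum>k\<le>length w. if k = length u then (if take (length u) w = u then f (drop (length u) w) else 0) else 0)"
    unfolding emult_def mon_def
    by (rule sum.cong) auto
  also have "\<dots> = (if take (length u) w = u then f (drop (length u) w) else 0)"
    by (auto simp: sum.delta' dest: arg_cong[of _ _ length])
  finally show ?thesis .
qed

lemma emult_mon_right: "emult f (mon u) w = (if length u \<le> length w \<and> drop (length w - length u) w = u then f (take (length w - length u) w) else 0)"
proof -
  have "emult f (mon u) w = (\<Sum>k\<le>length w. if k = length w - length u then (if length u \<le> length w \<and> drop (length w - length u) w = u then f (take (length w - length u) w) else 0) else 0)"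
    unfolding emult_def mon_def
    by (rule sum.cong) auto
  also have "\<dots> = (if length u \<le> length w \<and> drop (length w - length u) w = u then f (take (length w - length u) w) else 0)"
    by (auto simp: sum.delta')
  finally show ?thesis .
qed

lemma emult_mon_mon[simp]: "emult (mon a) (mon b) = mon (a @ b)"
proof (rule ext)
  fix w
  have e: "(w = a@b) = (take (length a) w = a \<and> drop (length a) w = b)"
    by (metis append_eq_conv_conj)
  show "emult (mon a) (mon b) w = mon (a @ b) w"
    by (subst emult_mon_left) (simp add: mon_def e)
qed

lemma emult_unit_l[simp]: "emult (mon []) f = f"
  by (rule ext) (simp add: emult_mon_left)

lemma emult_unit_r[simp]: "emult f (mon []) = f"
  by (rule ext) (simp add: emult_mon_right)


lemma emult_eadd_l[simp]: "emult (eadd f g) h = eadd (emult f h) (emult g h)"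
  by (rule ext) (simp add: emult_def eadd_def sum.distrib ring_distribs)
lemma emult_eadd_r[simp]: "emult h (eadd f g) = eadd (emult h f) (emult h g)"
  by (rule ext) (simp add: emult_def eadd_def sum.distrib ring_distribs)
lemma emult_esub_l[simp]: "emult (esub f g) h = esub (emult f h) (emult g h)"
  by (rule ext) (simp add: emult_def esub_def sum_subtractf ring_distribs)
lemma emult_esub_r[simp]: "emult h (esub f g) = esub (emult h f) (emult h g)"
  by (rule ext) (simp add: emult_def esub_def sum_subtractf ring_distribs)
lemma emult_esmult_l[simp]: "emult (esmult c f) h = esmult c (emult f h)"
  by (rule ext) (simp add: emult_def esmult_def sum_distrib_left mult.assoc)
lemma emult_esmult_r[simp]: "emult h (esmult c f) = esmult c (emult h f)"
  by (rule ext) (simp add: emult_def esmult_def sum_distrib_left mult.assoc mult.left_commute)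
lemma emult_zero_l[simp]: "emult (\<lambda>w. 0) h = (\<lambda>w. 0)"
  by (rule ext) (simp add: emult_def)
lemma emult_zero_r[simp]: "emult h (\<lambda>w. 0) = (\<lambda>w. 0)"
  by (rule ext) (simp add: emult_def)
lemma esub_self[simp]: "esub f f = (\<lambda>w. 0)"
  by (rule ext) (simp add: esub_def)

definition sumE :: "'a set \<Rightarrow> ('a \<Rightarrow> 'k::field elt) \<Rightarrow> 'k elt" where
  "sumE V h = (\<lambda>w. \<Sum>v\<in>V. h v w)"

lemma emult_sumE_l: "emult (sumE V h) g = sumE V (\<lambda>v. emult (h v) g)"
  by (rule ext) (simp add: emult_def sumE_def sum_distrib_right sum.swap[of _ V])
lemma emult_sumE_r: "emult g (sumE V h) = sumE V (\<lambda>v. emult g (h v))"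
  by (rule ext) (simp add: emult_def sumE_def sum_distrib_left sum.swap[of _ V])

lemma expand_pt: "finite (supp g) \<Longrightarrow> g w = (\<Sum>v\<in>supp g. g v * mon v w)"
  by (cases "w \<in> supp g") (auto simp: mon_def supp_def if_distrib sum.delta cong: if_cong)

lemma expand: "finite (supp g) \<Longrightarrow> g = sumE (supp g) (\<lambda>v. esmult (g v) (mon v))"
  by (rule ext) (simp add: sumE_def esmult_def expand_pt[symmetric])

lemma inIdeal_sumE: "finite V \<Longrightarrow> (\<forall>v\<in>V. inIdeal A R (h v)) \<Longrightarrow> inIdeal A R (sumE V h)"
proof (induction V rule: finite_induct)
  case empty
  have "sumE {} h = (\<lambda>w. 0)" by (simp add: sumE_def)
  then show ?case by (simp add: inIdeal.zero)
next
  case (insert x F)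
  have "sumE (insert x F) h = eadd (h x) (sumE F h)"
    using insert by (simp add: sumE_def eadd_def fun_eq_iff)
  then show ?case using insert by (simp add: inIdeal.add)
qed

lemma inIdeal_esub: "inIdeal A R x \<Longrightarrow> inIdeal A R y \<Longrightarrow> inIdeal A R (esub x y)"
proof -
  assume "inIdeal A R x" "inIdeal A R y"
  moreover have "esub x y = eadd x (esmult (-1) y)" by (simp add: fun_eq_iff esub_def eadd_def esmult_def)
  ultimately show ?thesis by (simp add: inIdeal.add inIdeal.smult)
qed

lemma labels_append[simp]: "labels (a @ b) = labels a @ labels b"
  by (simp add: labels_def)
lemma labels_simps[simp]: "labels [] = []" "labels (x # u) = lab x @ labels u"
  by (simp_all add: labels_def)

lemma supp_mon[simp]: "supp (mon u :: 'k::field elt) = {u}"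
  by (auto simp: supp_def mon_def)

lemma emult_mon_mon_assoc[simp]: "emult (mon a) (emult (mon b) f) = emult (mon (a @ b)) f"
  by (simp flip: emult_assoc)

lemma ideal_sandwich:
  assumes "(r,S) \<in> R" "set a \<subseteq> A" "set b \<subseteq> A" "finite (supp g)" "finite (supp h)"
    and c: "\<forall>p\<in>supp g. \<forall>q\<in>supp h. set p \<subseteq> A \<and> set q \<subseteq> A \<and>
       distinct (labels p @ labels a @ labels b @ labels q) \<and>
       set (labels p @ labels a @ labels b @ labels q) \<inter> S = {}"
  shows "inIdeal A R (emult (emult g (emult (emult (mon a) r) (mon b))) h)"
proof -
  let ?M = "emult (emult (mon a) r) (mon b)"
  have eq: "emult (emult g ?M) h = sumE (supp g) (\<lambda>p. sumE (supp h) (\<lambda>q.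
      esmult (g p) (esmult (h q) (emult (emult (mon (p @ a)) r) (mon (b @ q))))))"
    apply (subst expand[OF assms(4)])
    apply (subst expand[OF assms(5)])
    apply (simp add: emult_sumE_l emult_sumE_r emult_assoc emult_mon_mon_assoc)
    apply (rule ext)
    apply (simp add: sumE_def esmult_def sum_distrib_left sum.swap[of _ "supp g"] mult_ac)
    done
  have c1: "set (p@a) \<subseteq> A \<and> set (b@q) \<subseteq> A \<and> distinct (labels (p@a) @ labels (b@q)) \<and>
      set (labels (p@a) @ labels (b@q)) \<inter> S = {}" if "p \<in> supp g" "q \<in> supp h" for p q
  proof -
    have X: "set p \<subseteq> A \<and> set q \<subseteq> A \<and>
       distinct (labels p @ labels a @ labels b @ labels q) \<and>
       set (labels p @ labels a @ labels b @ labels q) \<inter> S = {}" using c that by blast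
    then show ?thesis using assms(2,3) by (simp only: labels_append append_assoc set_append) auto
  qed
  have "inIdeal A R (sumE (supp g) (\<lambda>p. sumE (supp h) (\<lambda>q.
      esmult (g p) (esmult (h q) (emult (emult (mon (p @ a)) r) (mon (b @ q)))))))"
    apply (intro inIdeal_sumE ballI inIdeal.smult inIdeal.gen)
    using c1 assms by auto
  then show ?thesis using eq by simp
qed


subsection \<open>The substitution morphism\<close>

lemma esmult_one[simp]: "esmult 1 f = f" by (simp add: esmult_def)

fun phi :: "letter \<Rightarrow> 'k::field elt" where
  "phi (LL i) = gcomm (mon [LD]) 1 (mon [LM i]) 0"
| "phi LD = mon [LD]"
| "phi (LM i) = mon [LM i]"

lemma phi_LL: "phi (LL i) = esub (mon [LD, LM i]) (mon [LM i, LD])"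
  by (simp add: gcomm_def)

declare phi.simps(1)[simp del]

fun Fw :: "word \<Rightarrow> 'k::field elt" where
  "Fw [] = mon []"
| "Fw (x # u) = emult (phi x) (Fw u)"

lemma Fw_append: "Fw (a @ b) = emult (Fw a) (Fw b)"
  by (induction a) (simp_all add: emult_assoc)

lemma emult_nz: "emult f g w \<noteq> 0 \<Longrightarrow> \<exists>a b. w = a @ b \<and> f a \<noteq> 0 \<and> g b \<noteq> 0"
proof (rule ccontr)
  assume "emult f g w \<noteq> 0" "\<not> (\<exists>a b. w = a @ b \<and> f a \<noteq> 0 \<and> g b \<noteq> 0)"
  then have "(\<Sum>(a,b)\<in>splits w. f a * g b) = 0"
    by (intro sum.neutral) (auto simp: splits_def)
  with \<open>emult f g w \<noteq> 0\<close> show False by (simp add: emult_splits)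
qed

lemma phi_nz: "phi x a \<noteq> 0 \<Longrightarrow> (x = LD \<and> a = [LD]) \<or> (\<exists>i. x = LM i \<and> a = [LM i]) \<or>
   (\<exists>i. x = LL i \<and> (a = [LD, LM i] \<or> a = [LM i, LD]))"
  by (cases x) (auto simp: phi_LL mon_def esub_def split: if_splits)

definition Lset :: "word \<Rightarrow> letter set" where
  "Lset w = set w \<union> {LL i | i. LM i \<in> set w}"

lemma wdeg_simps[simp]: "wdeg [] = 0" "wdeg (x # u) = ldeg x + wdeg u" "wdeg (a @ b) = wdeg a + wdeg b"
  by (simp_all add: wdeg_def)

lemma Fw_nz: "(Fw u w :: 'k::field) \<noteq> 0 \<Longrightarrow> length u \<le> length w \<and> set u \<subseteq> Lset w \<and> labels w = labels u \<and>
   wdeg w = wdeg u \<and> set w \<subseteq> alph2"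
proof (induction u arbitrary: w)
  case Nil
  then show ?case by (simp add: mon_def split: if_splits)
next
  case (Cons x u)
  have "(emult (phi x) (Fw u) w :: 'k) \<noteq> 0" using Cons.prems by simp
  from emult_nz[OF this] obtain a b where ab: "w = a @ b" "(phi x a :: 'k) \<noteq> 0" "(Fw u b :: 'k) \<noteq> 0"
    by blast
  from Cons.IH[OF ab(3)] have IH: "length u \<le> length b \<and> set u \<subseteq> Lset b \<and> labels b = labels u \<and>
   wdeg b = wdeg u \<and> set b \<subseteq> alph2" .
  have L: "Lset b \<subseteq> Lset w" using ab(1) by (auto simp: Lset_def)
  have "x \<in> Lset w \<and> 1 \<le> length a \<and> labels a = lab x \<and> wdeg a = ldeg x \<and> set a \<subseteq> alph2"
    using phi_nz[OF ab(2)]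
  proof (elim disjE exE conjE)
    fix i assume "x = LL i" "a = [LD, LM i]"
    then show ?thesis using ab(1) by (simp add: Lset_def alph2_def)
  next
    fix i assume "x = LL i" "a = [LM i, LD]"
    then show ?thesis using ab(1) by (simp add: Lset_def alph2_def)
  qed (use ab(1) in \<open>simp_all add: Lset_def alph2_def\<close>)
  then show ?case using IH L ab(1) by auto
qed

lemma supp_emult: "supp (emult f g) \<subseteq> (\<lambda>(a,b). a @ b) ` (supp f \<times> supp g)"
  using emult_nz unfolding supp_def by fastforce

lemma finite_supp_emult: "finite (supp f) \<Longrightarrow> finite (supp g) \<Longrightarrow> finite (supp (emult f g))"
  by (rule finite_subset[OF supp_emult]) auto

lemma finite_supp_phi: "finite (supp (phi x))"
proof (cases x)
  case (LL i)
  have "supp (phi x) \<subseteq> {[LD, LM i], [LM i, LD]}"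
    using LL by (auto simp: supp_def phi_LL esub_def mon_def split: if_splits)
  then show ?thesis by (rule finite_subset) auto
qed auto

lemma finite_supp_Fw: "finite (supp (Fw u))"
  by (induction u) (auto intro: finite_supp_emult finite_supp_phi)

definition P :: "word \<Rightarrow> word set" where
  "P w = {u. set u \<subseteq> Lset w \<and> length u \<le> length w}"

lemma finite_Lset: "finite (Lset w)"
proof -
  have "{LL i | i. LM i \<in> set w} \<subseteq> (\<lambda>x. case x of LM i \<Rightarrow> LL i | y \<Rightarrow> y) ` set w"
  proof safe
    fix i assume "LM i \<in> set w"
    then show "LL i \<in> (\<lambda>x. case x of LM i \<Rightarrow> LL i | y \<Rightarrow> y) ` set w"
      by (rule rev_image_eqI) simp
  qed
  then have "finite {LL i |i. LM i \<in> set w}" by (rule finite_subset) simp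
  then show ?thesis unfolding Lset_def by simp
qed

lemma finite_P: "finite (P w)"
  unfolding P_def by (rule finite_lists_length_le[OF finite_Lset])

lemma Fw_nz_P: "Fw u w \<noteq> 0 \<Longrightarrow> u \<in> P w"
  using Fw_nz[of u w] by (auto simp: P_def)

definition Fm :: "'k::field elt \<Rightarrow> 'k elt" where
  "Fm f = (\<lambda>w. \<Sum>u\<in>P w. f u * Fw u w)"

lemma F_alt:
  assumes "finite S" "\<And>u. f u * Fw u w \<noteq> 0 \<Longrightarrow> u \<in> S"
  shows "Fm f w = (\<Sum>u\<in>S. f u * Fw u w)"
proof -
  have "Fm f w = (\<Sum>u\<in>P w \<inter> S. f u * Fw u w)"
    unfolding Fm_def
  proof (rule sum.mono_neutral_right[OF finite_P])
    show "\<forall>u\<in>P w - P w \<inter> S. f u * Fw u w = 0" using assms(2) by blast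
  qed blast
  also have "\<dots> = (\<Sum>u\<in>S. f u * Fw u w)"
  proof (rule sum.mono_neutral_left[OF assms(1)])
    show "\<forall>u\<in>S - P w \<inter> S. f u * Fw u w = 0" using Fw_nz_P by fastforce
  qed blast
  finally show ?thesis .
qed


lemma Fm_mon[simp]: "Fm (mon v) = (Fw v :: 'k::field elt)"
proof (rule ext)
  fix w
  have "Fm (mon v) w = (\<Sum>u\<in>{v}. mon v u * (Fw u w :: 'k))"
    by (rule F_alt) (auto simp: mon_def split: if_splits)
  then show "Fm (mon v) w = (Fw v w :: 'k)" by (simp add: mon_def)
qed

lemma Fm_eadd[simp]: "Fm (eadd f g) = eadd (Fm f) (Fm g)"
  by (rule ext) (simp add: Fm_def eadd_def sum.distrib ring_distribs)
lemma Fm_esub[simp]: "Fm (esub f g) = esub (Fm f) (Fm g)"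
  by (rule ext) (simp add: Fm_def esub_def sum_subtractf ring_distribs)
lemma Fm_esmult[simp]: "Fm (esmult c f) = esmult c (Fm f)"
  by (rule ext) (simp add: Fm_def esmult_def sum_distrib_left mult.assoc)
lemma Fm_zero[simp]: "Fm (\<lambda>w. 0) = (\<lambda>w. 0)"
  by (rule ext) (simp add: Fm_def)

lemma Lset_mono: "set a \<subseteq> set b \<Longrightarrow> Lset a \<subseteq> Lset b"
  by (auto simp: Lset_def)

lemma P_mono: "set a \<subseteq> set b \<Longrightarrow> length a \<le> length b \<Longrightarrow> P a \<subseteq> P b"
  unfolding P_def using Lset_mono[of a b] by auto

lemma Fm_emult: "Fm (emult f g) = emult (Fm f) (Fm (g :: 'k::field elt))"
proof (rule ext)
  fix w
  let ?Q = "P w"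
  have sub: "a \<in> ?Q \<and> b \<in> ?Q" if "a @ b \<in> ?Q" for a b
    using that by (auto simp: P_def)
  have "Fm (emult f g) w = (\<Sum>u\<in>?Q. \<Sum>p\<in>splits u. f (fst p) * g (snd p) * Fw u w)"
    unfolding Fm_def emult_splits by (simp only: sum_distrib_right case_prod_beta)
  also have "\<dots> = (\<Sum>(u,p)\<in>Sigma ?Q splits. f (fst p) * g (snd p) * Fw u w)"
    by (rule sum.Sigma) (auto simp: finite_P)
  also have "\<dots> = (\<Sum>p\<in>{p. fst p @ snd p \<in> ?Q}. f (fst p) * g (snd p) * Fw (fst p @ snd p) w)"
    by (rule sum.reindex_bij_witness[where i="\<lambda>p. (fst p @ snd p, p)" and j="\<lambda>(u,p). p"])
       (auto simp: splits_def)
  also have "\<dots> = (\<Sum>p\<in>?Q \<times> ?Q. f (fst p) * g (snd p) * Fw (fst p @ snd p) w)"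
  proof (rule sum.mono_neutral_left)
    show "finite (?Q \<times> ?Q)" by (simp add: finite_P)
    show "{p. fst p @ snd p \<in> ?Q} \<subseteq> ?Q \<times> ?Q"
    proof
      fix p assume "p \<in> {p. fst p @ snd p \<in> ?Q}"
      then have "fst p \<in> ?Q \<and> snd p \<in> ?Q" using sub by blast
      then show "p \<in> ?Q \<times> ?Q" by (simp add: mem_Times_iff)
    qed
    show "\<forall>p\<in>?Q \<times> ?Q - {p. fst p @ snd p \<in> ?Q}. f (fst p) * g (snd p) * Fw (fst p @ snd p) w = 0"
    proof
      fix p assume "p \<in> ?Q \<times> ?Q - {p. fst p @ snd p \<in> ?Q}"
      then have "fst p @ snd p \<notin> ?Q" by auto
      then have "(Fw (fst p @ snd p) w :: 'k) = 0" using Fw_nz_P by blast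
      then show "f (fst p) * g (snd p) * Fw (fst p @ snd p) w = 0" by simp
    qed
  qed
  also have "\<dots> = (\<Sum>p\<in>?Q \<times> ?Q. f (fst p) * g (snd p) * (\<Sum>q\<in>splits w. Fw (fst p) (fst q) * Fw (snd p) (snd q)))"
    by (simp only: Fw_append emult_splits split_def)
  also have "\<dots> = (\<Sum>q\<in>splits w. \<Sum>p\<in>?Q \<times> ?Q. f (fst p) * Fw (fst p) (fst q) * (g (snd p) * Fw (snd p) (snd q)))"
    by (subst sum.swap) (simp only: sum_distrib_left mult_ac)
  also have "\<dots> = (\<Sum>q\<in>splits w. (\<Sum>a\<in>?Q. f a * Fw a (fst q)) * (\<Sum>b\<in>?Q. g b * Fw b (snd q)))"
    by (rule sum.cong[OF refl]) (simp add: sum_product sum.cartesian_product split_def)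
  also have "\<dots> = (\<Sum>q\<in>splits w. Fm f (fst q) * Fm g (snd q))"
  proof (rule sum.cong[OF refl])
    fix q assume q: "q \<in> splits w"
    then have s: "set (fst q) \<subseteq> set w" "set (snd q) \<subseteq> set w" "length (fst q) \<le> length w"
      "length (snd q) \<le> length w" by (auto simp: splits_def)
    have "Fm f (fst q) = (\<Sum>a\<in>?Q. f a * Fw a (fst q))"
    proof (rule F_alt[OF finite_P])
      fix a assume "f a * Fw a (fst q) \<noteq> 0"
      then have "a \<in> P (fst q)" using Fw_nz_P by (metis mult_zero_right)
      then show "a \<in> ?Q" using P_mono[OF s(1,3)] by blast
    qed
    moreover have "Fm g (snd q) = (\<Sum>b\<in>?Q. g b * Fw b (snd q))"
    proof (rule F_alt[OF finite_P])
      fix a assume "g a * Fw a (snd q) \<noteq> 0"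
      then have "a \<in> P (snd q)" using Fw_nz_P by (metis mult_zero_right)
      then show "a \<in> ?Q" using P_mono[OF s(2,4)] by blast
    qed
    ultimately show "(\<Sum>a\<in>?Q. f a * Fw a (fst q)) * (\<Sum>b\<in>?Q. g b * Fw b (snd q)) = Fm f (fst q) * Fm g (snd q)"
      by simp
  qed
  also have "\<dots> = emult (Fm f) (Fm g) w"
    by (simp only: emult_splits split_def)
  finally show "Fm (emult f g) w = emult (Fm f) (Fm g) w" .
qed

lemma Fm_gcomm[simp]: "Fm (gcomm x dx y dy) = gcomm (Fm x) dx (Fm y) dy"
  by (simp add: gcomm_def Fm_emult)

lemma inj_relab: "inj t \<Longrightarrow> inj (relab_letter t)"
  unfolding inj_def
proof (intro allI impI)
  fix x y assume t: "\<forall>x y. t x = t y \<longrightarrow> x = y" and e: "relab_letter t x = relab_letter t y"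
  then show "x = y" by (cases x; cases y) auto
qed

lemma mon_map: "inj \<sigma> \<Longrightarrow> (mon (map \<sigma> v) (map \<sigma> a) :: 'k::field) = mon v a"
  by (simp add: mon_def inj_map_eq_map)

lemma phi_map: "inj t \<Longrightarrow> (phi (relab_letter t x) (map (relab_letter t) a) :: 'k::field) = phi x a"
proof (cases x)
  case (LL i)
  assume t: "inj t"
  have "(phi (relab_letter t x) (map (relab_letter t) a) :: 'k) =
    mon (map (relab_letter t) [LD, LM i]) (map (relab_letter t) a) - mon (map (relab_letter t) [LM i, LD]) (map (relab_letter t) a)"
    using LL by (simp add: phi_LL esub_def)
  also have "\<dots> = phi x a"
    using LL mon_map[OF inj_relab[OF t], of "[LD, LM i]" a, where 'k='k] mon_map[OF inj_relab[OF t], of "[LM i, LD]" a, where 'k='k]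
    by (simp add: phi_LL esub_def)
  finally show ?thesis .
next
  case LD
  assume t: "inj t"
  show ?thesis using LD mon_map[OF inj_relab[OF t], of "[LD]" a] by simp
next
  case (LM i)
  assume t: "inj t"
  show ?thesis using LM mon_map[OF inj_relab[OF t], of "[LM i]" a] by simp
qed

lemma emult_map:
  assumes "\<And>a. g (map \<sigma> a) = g' a" "\<And>b. h (map \<sigma> b) = h' b"
  shows "emult g h (map \<sigma> w) = emult g' h' w"
  unfolding emult_def by (simp add: take_map drop_map assms)

lemma Fw_map: "inj t \<Longrightarrow> (Fw (map (relab_letter t) u) (map (relab_letter t) w) :: 'k::field) = Fw u w"
proof (induction u arbitrary: w)
  case Nil
  then show ?case using mon_map[OF inj_relab[OF Nil], of "[]" w] by simp
next
  case (Cons x u)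
  have "emult (phi (relab_letter t x)) (Fw (map (relab_letter t) u)) (map (relab_letter t) w) = (emult (phi x) (Fw u) w :: 'k)"
    by (rule emult_map) (use phi_map[OF Cons.prems, where 'k='k] Cons.IH[OF Cons.prems] in auto)
  then show ?case by simp
qed

lemma Fm_relabel:
  assumes s: "bij s"
  shows "Fm (relabel s f) = relabel s (Fm (f :: 'k::field elt))"
proof (rule ext)
  fix w
  define \<sigma> where "\<sigma> = relab_letter (inv s)"
  define \<tau> where "\<tau> = relab_letter s"
  have injinv: "inj (inv s)" using s bij_imp_bij_inv bij_is_inj by blast
  have injs: "inj \<sigma>" unfolding \<sigma>_def by (rule inj_relab[OF injinv])
  have st: "\<sigma> (\<tau> x) = x" for x
    unfolding \<sigma>_def \<tau>_def using s by (cases x) (simp_all add: bij_is_inj)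
  have ts: "\<tau> (\<sigma> x) = x" for x
    unfolding \<sigma>_def \<tau>_def using s by (cases x) (simp_all add: bij_is_surj surj_f_inv_f)
  have "Fm (relabel s f) w = (\<Sum>u\<in>P w. f (map \<sigma> u) * Fw (map \<sigma> u) (map \<sigma> w))"
    unfolding Fm_def relabel_def \<sigma>_def using Fw_map[OF injinv, where 'k='k] by simp
  also have "\<dots> = (\<Sum>u\<in>map \<sigma> ` P w. f u * Fw u (map \<sigma> w))"
    by (rule sum.reindex[symmetric, unfolded comp_def]) (meson inj_map_eq_map injs inj_onI)
  also have "\<dots> = Fm f (map \<sigma> w)"
  proof (rule F_alt[symmetric])
    show "finite (map \<sigma> ` P w)" by (simp add: finite_P)
    fix u assume "f u * Fw u (map \<sigma> w) \<noteq> 0"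
    then have nz: "(Fw u (map \<sigma> w) :: 'k) \<noteq> 0" by auto
    have u: "u = map \<sigma> (map \<tau> u)" by (simp add: st ts comp_def)
    have e: "map \<sigma> (map \<tau> u) = u" using u by simp
    have "Fw (map \<sigma> (map \<tau> u)) (map \<sigma> w) = (Fw (map \<tau> u) w :: 'k)"
      using Fw_map[OF injinv, where 'k='k] unfolding \<sigma>_def by blast
    then have "(Fw (map \<tau> u) w :: 'k) = Fw u (map \<sigma> w)" unfolding e by simp
    then have "map \<tau> u \<in> P w" using nz Fw_nz_P by metis
    then show "u \<in> map \<sigma> ` P w" using u by blast
  qed
  also have "\<dots> = relabel s (Fm f) w" by (simp add: relabel_def \<sigma>_def)
  finally show "Fm (relabel s f) w = relabel s (Fm f) w" .
qed

lemma Fm_nz: "(Fm f w :: 'k::field) \<noteq> 0 \<Longrightarrow> \<exists>u. f u \<noteq> 0 \<and> (Fw u w :: 'k) \<noteq> 0"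
  unfolding Fm_def by (metis (no_types, lifting) mult_eq_0_iff sum.neutral)

lemma Fm_homdeg: "homdeg d f \<Longrightarrow> homdeg d (Fm (f :: 'k::field elt))"
  unfolding homdeg_def using Fm_nz Fw_nz by metis

lemma Fm_inA: "inA UNIV I f \<Longrightarrow> inA alph2 I (Fm (f :: 'k::field elt))"
proof -
  assume A: "inA UNIV I f"
  have sub: "{w. Fm f w \<noteq> 0} \<subseteq> (\<Union>u\<in>{u. f u \<noteq> 0}. supp (Fw u :: 'k elt))"
    using Fm_nz unfolding supp_def by fastforce
  have fin: "finite {w. Fm f w \<noteq> 0}"
    using A finite_supp_Fw unfolding inA_def by (intro finite_subset[OF sub]) auto
  have "\<forall>w. Fm f w \<noteq> 0 \<longrightarrow> set w \<subseteq> alph2 \<and> distinct (labels w) \<and> set (labels w) = I"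
  proof (intro allI impI)
    fix w assume "Fm f w \<noteq> 0"
    then obtain u where u: "f u \<noteq> 0" "(Fw u w :: 'k) \<noteq> 0" using Fm_nz by blast
    show "set w \<subseteq> alph2 \<and> distinct (labels w) \<and> set (labels w) = I"
      using Fw_nz[OF u(2)] A u(1) unfolding inA_def by auto
  qed
  then show ?thesis using fin unfolding inA_def by blast
qed

lemma Fw_alph2: "set u \<subseteq> alph2 \<Longrightarrow> Fw u = (mon u :: 'k::field elt)"
proof (induction u)
  case (Cons x u)
  then have "phi x = (mon [x] :: 'k elt)" by (cases x) (auto simp: alph2_def)
  then show ?case using Cons by simp
qed simp

lemma Fm_alph2: "inA alph2 I y \<Longrightarrow> Fm y = (y :: 'k::field elt)"
proof (rule ext)
  fix w assume A: "inA alph2 I y"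
  have "Fm y w = (\<Sum>u\<in>{w}. y u * Fw u w)"
  proof (rule F_alt)
    fix u assume nz: "y u * Fw u w \<noteq> 0"
    then have "set u \<subseteq> alph2" using A unfolding inA_def by auto
    then show "u \<in> {w}" using nz Fw_alph2[where 'k='k] by (auto simp: mon_def split: if_splits)
  qed simp
  also have "\<dots> = y w"
  proof (cases "y w = 0")
    case False
    then have "set w \<subseteq> alph2" using A unfolding inA_def by auto
    then show ?thesis using Fw_alph2[where 'k='k] by (simp add: mon_def)
  qed simp
  finally show "Fm y w = y w" .
qed

lemma Fw_supp_labels: "q \<in> supp (Fw u :: 'k::field elt) \<Longrightarrow> labels q = labels u"
  using Fw_nz[of u q, where 'k='k] by (simp add: supp_def)

lemma Fw_supp_alph2: "q \<in> supp (Fw u :: 'k::field elt) \<Longrightarrow> set q \<subseteq> alph2"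
  using Fw_nz[of u q, where 'k='k] by (simp add: supp_def)

lemma Rel1_E: "(esub (phi (LL i)) (mon [LL i]), {i}) \<in> Rel1"
  unfolding Rel1_def by (auto simp: phi.simps(1))

lemma lemma_D: "distinct (labels (p @ u)) \<Longrightarrow>
   inIdeal alph1 Rel1 (emult (mon p) (esub (Fw u) (mon u)) :: 'k::field elt)"
proof (induction u arbitrary: p)
  case Nil
  then show ?case by (simp add: inIdeal.zero)
next
  case (Cons a u)
  show ?case
  proof (cases "\<exists>i. a = LL i")
    case False
    then have ph: "phi a = (mon [a] :: 'k elt)" by (cases a) auto
    have "emult (mon p) (esub (Fw (a # u)) (mon (a # u))) =
        (emult (mon (p @ [a])) (esub (Fw u) (mon u)) :: 'k elt)"
      by (simp add: ph)
    moreover have "inIdeal alph1 Rel1 (emult (mon (p @ [a])) (esub (Fw u) (mon u)) :: 'k elt)"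
      using Cons.IH[of "p @ [a]"] Cons.prems by simp
    ultimately show ?thesis by simp
  next
    case True
    then obtain i where a: "a = LL i" by blast
    let ?E = "esub (phi (LL i)) (mon [LL i]) :: 'k elt"
    have eq: "emult (mon p) (esub (Fw (a # u)) (mon (a # u))) =
        eadd (emult (mon p) (emult ?E (Fw u))) (emult (mon (p @ [LL i])) (esub (Fw u) (mon u)))"
      apply (simp add: a emult_assoc)
      apply (rule ext)
      apply (simp add: esub_def eadd_def)
      done
    have i1: "inIdeal alph1 Rel1 (emult (mon (p @ [LL i])) (esub (Fw u) (mon u)) :: 'k elt)"
      using Cons.IH[of "p @ [LL i]"] Cons.prems a by simp
    have "inIdeal alph1 Rel1 (emult (emult (mon p) (emult (emult (mon []) ?E) (mon []))) (Fw u))"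
    proof (rule ideal_sandwich[OF Rel1_E])
      show "finite (supp (mon p :: 'k elt))" by simp
      show "finite (supp (Fw u :: 'k elt))" by (rule finite_supp_Fw)
      show "\<forall>pa\<in>supp (mon p :: 'k elt). \<forall>q\<in>supp (Fw u :: 'k elt). set pa \<subseteq> alph1 \<and> set q \<subseteq> alph1 \<and>
       distinct (labels pa @ labels [] @ labels [] @ labels q) \<and>
       set (labels pa @ labels [] @ labels [] @ labels q) \<inter> {i} = {}"
        using Cons.prems a by (auto simp: alph1_def dest!: Fw_supp_labels[where 'k='k])
    qed (auto simp: alph1_def)
    then have i2: "inIdeal alph1 Rel1 (emult (mon p) (emult ?E (Fw u)))"
      by (simp add: emult_assoc)
    show ?thesis using eq inIdeal.add[OF i2 i1] by simp
  qed
qed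

lemma GF_ideal: "inA alph1 I x \<Longrightarrow> inIdeal alph1 Rel1 (esub (Fm x) (x :: 'k::field elt))"
proof -
  assume A: "inA alph1 I x"
  then have fin: "finite (supp x)" unfolding inA_def supp_def by simp
  have "esub (Fm x) x = sumE (supp x) (\<lambda>u. esmult (x u) (esub (Fw u) (mon u)))"
  proof (rule ext)
    fix w
    have "Fm x w = (\<Sum>u\<in>supp x. x u * Fw u w)"
      by (rule F_alt[OF fin]) (auto simp: supp_def)
    then show "esub (Fm x) x w = sumE (supp x) (\<lambda>u. esmult (x u) (esub (Fw u) (mon u))) w"
      using expand_pt[OF fin, of w]
      by (simp add: esub_def sumE_def esmult_def sum_subtractf right_diff_distrib)
  qed
  moreover have "inIdeal alph1 Rel1 (sumE (supp x) (\<lambda>u. esmult (x u) (esub (Fw u) (mon u))))"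
  proof (rule inIdeal_sumE[OF fin], rule ballI, rule inIdeal.smult)
    fix u assume "u \<in> supp x"
    then have "distinct (labels ([] @ u))" using A unfolding inA_def supp_def by auto
    from lemma_D[OF this, where 'k='k] show "inIdeal alph1 Rel1 (esub (Fw u) (mon u) :: 'k elt)" by simp
  qed
  ultimately show ?thesis by simp
qed

lemma id_r4: "gcomm (mon [LD]) 1 (phi (LL i)) 1 =
  (esub (emult (emult (mon []) (mon [LD,LD])) (mon [LM i])) (emult (emult (mon [LM i]) (mon [LD,LD])) (mon [])) :: 'k::field elt)"
  apply (simp add: gcomm_def phi_LL)
  apply (rule ext)
  apply (simp add: esub_def esmult_def eadd_def mon_def)
  done

lemma id_r6: "i \<noteq> j \<Longrightarrow> gcomm (phi (LL i)) 1 (phi (LL j)) 1 =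
  (eadd (esmult (-1) (emult (emult (mon [LD]) (gcomm (phi (LL i)) 1 (mon [LM j]) 0)) (mon [])))
  (eadd (esmult (-1) (emult (emult (mon []) (gcomm (phi (LL i)) 1 (mon [LM j]) 0)) (mon [LD])))
  (eadd (emult (emult (mon []) (mon [LD,LD])) (mon [LM i, LM j]))
  (eadd (emult (emult (mon [LM j, LM i]) (mon [LD,LD])) (mon []))
  (eadd (esmult (-1) (emult (emult (mon [LM i]) (mon [LD,LD])) (mon [LM j])))
        (esmult (-1) (emult (emult (mon [LM j]) (mon [LD,LD])) (mon [LM i]))))))) :: 'k::field elt)"
  apply (simp add: gcomm_def phi_LL)
  apply (rule ext)
  apply (simp add: esub_def esmult_def eadd_def mon_def)
  done

lemma id_t: "gcomm (phi (LL i)) 1 (mon [LM j]) 0 =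
  (eadd (emult (emult (mon []) (gcomm (mon [LL i]) 1 (mon [LM j]) 0)) (mon []))
   (esub (emult (emult (mon []) (esub (phi (LL i)) (mon [LL i]))) (mon [LM j]))
         (emult (emult (mon [LM j]) (esub (phi (LL i)) (mon [LL i]))) (mon []))) :: 'k::field elt)"
  apply (simp add: gcomm_def phi_LL)
  apply (rule ext)
  apply (simp add: esub_def esmult_def eadd_def mon_def)
  done

lemma Fw_LL[simp]: "Fw [LL i] = phi (LL i)" by simp

lemma Fw_supp: "q \<in> supp (Fw u :: 'k::field elt) \<Longrightarrow> labels q = labels u \<and> set q \<subseteq> alph2"
  using Fw_nz[of u q, where 'k='k] by (simp add: supp_def)

lemma sandwich_Fw:
  assumes "(r', S') \<in> Rel2" "set a \<subseteq> alph2" "set b \<subseteq> alph2"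
    "distinct (labels u @ labels a @ labels b @ labels v)"
    "set (labels u @ labels a @ labels b @ labels v) \<inter> S' = {}"
  shows "inIdeal alph2 Rel2 (emult (emult (Fw u) (emult (emult (mon a) r') (mon b))) (Fw v) :: 'k::field elt)"
  by (rule ideal_sandwich[OF assms(1-3) finite_supp_Fw finite_supp_Fw])
     (use assms in \<open>auto dest!: Fw_supp[where 'k='k]\<close>)

lemma R2_DD: "(mon [LD,LD], {}) \<in> Rel2" by (simp add: Rel2_def)
lemma R2_C: "i \<noteq> j \<Longrightarrow> (gcomm (mon [LM i]) 0 (mon [LM j]) 0, {i,j}) \<in> Rel2"
  by (auto simp: Rel2_def)
lemma R2_T: "i \<noteq> j \<Longrightarrow> (gcomm (phi (LL i)) 1 (mon [LM j]) 0, {i,j}) \<in> Rel2"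
  by (auto simp: Rel2_def phi.simps(1))

lemmas distr = emult_eadd_l emult_eadd_r emult_esub_l emult_esub_r emult_esmult_l emult_esmult_r

lemma F_gen:
  assumes "(r, S) \<in> Rel1" "distinct (labels u @ labels v)" "set (labels u @ labels v) \<inter> S = {}"
  shows "inIdeal alph2 Rel2 (emult (emult (Fw u) (Fm r)) (Fw v) :: 'k::field elt)"
  using assms(1) unfolding Rel1_def
proof (elim UnE CollectE exE conjE insertE emptyE)
  assume "(r, S) = (mon [LD, LD], {})"
  then have r: "r = mon [LD,LD]" "S = {}" by auto
  have "Fm r = (emult (emult (mon []) (mon [LD,LD])) (mon []) :: 'k elt)" using r by simp
  then show ?thesis
    using sandwich_Fw[OF R2_DD, of "[]" "[]" u v, where 'k='k] assms(2,3) by simp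
next
  fix i j assume "(r, S) = (gcomm (mon [LM i]) 0 (mon [LM j]) 0, {i, j})" "i \<noteq> j"
  then have r: "r = gcomm (mon [LM i]) 0 (mon [LM j]) 0" "S = {i,j}" "i \<noteq> j" by auto
  have "Fm r = (emult (emult (mon []) (gcomm (mon [LM i]) 0 (mon [LM j]) 0)) (mon []) :: 'k elt)" using r by simp
  then show ?thesis
    using sandwich_Fw[OF R2_C[OF r(3)], of "[]" "[]" u v, where 'k='k] assms(2,3) r by simp
next
  fix i assume "(r, S) = (esub (gcomm (mon [LD]) 1 (mon [LM i]) 0) (mon [LL i]), {i})"
  then have r: "r = esub (gcomm (mon [LD]) 1 (mon [LM i]) 0) (mon [LL i])" by auto
  have "Fm r = (\<lambda>w. 0 :: 'k)" using r by (simp add: phi.simps(1))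
  then show ?thesis by (simp add: inIdeal.zero)
next
  fix i assume "(r, S) = (gcomm (mon [LD]) 1 (mon [LL i]) 1, {i})"
  then have r: "r = gcomm (mon [LD]) 1 (mon [LL i]) 1" "S = {i}" by auto
  have "Fm r = (esub (emult (emult (mon []) (mon [LD,LD])) (mon [LM i])) (emult (emult (mon [LM i]) (mon [LD,LD])) (mon [])) :: 'k elt)"
    using r id_r4 by simp
  then show ?thesis
    apply (simp only:)
    apply (simp only: distr)
    apply (intro inIdeal.add inIdeal.smult inIdeal_esub sandwich_Fw[OF R2_DD])
    using assms(2,3) r by (auto simp: alph2_def)
next
  fix i j assume "(r, S) = (gcomm (mon [LL i]) 1 (mon [LM j]) 0, {i, j})" "i \<noteq> j"
  then have r: "r = gcomm (mon [LL i]) 1 (mon [LM j]) 0" "S = {i,j}" "i \<noteq> j" by auto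
  have "Fm r = (emult (emult (mon []) (gcomm (phi (LL i)) 1 (mon [LM j]) 0)) (mon []) :: 'k elt)" using r by simp
  then show ?thesis
    using sandwich_Fw[OF R2_T[OF r(3)], of "[]" "[]" u v, where 'k='k] assms(2,3) r by simp
next
  fix i j assume "(r, S) = (gcomm (mon [LL i]) 1 (mon [LL j]) 1, {i, j})" "i \<noteq> j"
  then have r: "r = gcomm (mon [LL i]) 1 (mon [LL j]) 1" "S = {i,j}" "i \<noteq> j" by auto
  have "Fm r = (gcomm (phi (LL i)) 1 (phi (LL j)) 1 :: 'k elt)" using r by simp
  also note id_r6[OF r(3)]
  finally show ?thesis
    apply (simp only:)
    apply (simp only: distr)
    apply (intro inIdeal.add inIdeal.smult inIdeal_esub sandwich_Fw[OF R2_DD] sandwich_Fw[OF R2_T[OF r(3)]])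
    using assms(2,3) r by (auto simp: alph2_def)
qed

lemma F_ideal: "inIdeal alph1 Rel1 x \<Longrightarrow> inIdeal alph2 Rel2 (Fm (x :: 'k::field elt))"
proof (induction rule: inIdeal.induct)
  case zero
  then show ?case by (simp add: inIdeal.zero)
next
  case (add x y)
  then show ?case by (simp add: inIdeal.add)
next
  case (smult x c)
  then show ?case by (simp add: inIdeal.smult)
next
  case (gen r S u v)
  have "Fm (emult (emult (mon u) r) (mon v)) = emult (emult (Fw u) (Fm r)) (Fw v)"
    by (simp only: Fm_emult Fm_mon)
  then show ?case using F_gen[OF gen(1,4,5)] by simp
qed

lemma R1_LM: "i \<noteq> j \<Longrightarrow> (gcomm (mon [LL i]) 1 (mon [LM j]) 0, {i,j}) \<in> Rel1"
  by (auto simp: Rel1_def)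

lemma sandwich_eadd: "inIdeal A R (emult (emult g x) h) \<Longrightarrow> inIdeal A R (emult (emult g y) h) \<Longrightarrow>
  inIdeal A R (emult (emult g (eadd x y)) h)"
  by (simp add: inIdeal.add)

lemma sandwich_esub: "inIdeal A R (emult (emult g x) h) \<Longrightarrow> inIdeal A R (emult (emult g y) h) \<Longrightarrow>
  inIdeal A R (emult (emult g (esub x y)) h)"
  by (simp add: inIdeal_esub)

lemma G_ideal: "inIdeal alph2 Rel2 y \<Longrightarrow> inIdeal alph1 Rel1 (y :: 'k::field elt)"
proof (induction rule: inIdeal.induct)
  case zero
  then show ?case by (simp add: inIdeal.zero)
next
  case (add x y)
  then show ?case by (simp add: inIdeal.add)
next
  case (smult x c)
  then show ?case by (simp add: inIdeal.smult)
next
  case (gen r S u v)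
  note g = gen
  from gen(1) show ?case unfolding Rel2_def
  proof (elim UnE CollectE exE conjE insertE emptyE)
    assume "(r, S) = (mon [LD, LD], {})"
    then have "(r, S) \<in> Rel1" by (simp add: Rel1_def)
    then show ?thesis by (rule inIdeal.gen) (use g in \<open>auto simp: alph1_def\<close>)
  next
    fix i j assume "(r, S) = (gcomm (mon [LM i]) 0 (mon [LM j]) 0, {i, j})" "i \<noteq> j"
    then have "(r, S) \<in> Rel1" by (auto simp: Rel1_def)
    then show ?thesis by (rule inIdeal.gen) (use g in \<open>auto simp: alph1_def\<close>)
  next
    fix i j assume "(r, S) = (gcomm (gcomm (mon [LD]) 1 (mon [LM i]) 0) 1 (mon [LM j]) 0, {i, j})" "i \<noteq> j"
    then have r: "r = gcomm (phi (LL i)) 1 (mon [LM j]) 0" "S = {i,j}" "i \<noteq> j" by (auto simp: phi.simps(1))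
    show ?thesis
      unfolding r(1) id_t
      apply (rule sandwich_eadd)
      subgoal by (rule ideal_sandwich[OF R1_LM[OF r(3)]]) (use g(4,5) r(2,3) in \<open>simp_all add: alph1_def\<close>)
      apply (rule sandwich_esub)
      subgoal by (rule ideal_sandwich[OF Rel1_E]) (use g(4,5) r(2,3) in \<open>simp_all add: alph1_def\<close>)
      subgoal by (rule ideal_sandwich[OF Rel1_E]) (use g(4,5) r(2,3) in \<open>simp_all add: alph1_def\<close>)
      done
  qed
qed

theorem mainTheorem8:
  shows "taa_quot_iso alph1 (Rel1 :: ('k::field_char_0 elt \<times> nat set) set) alph2 Rel2"
  unfolding taa_quot_iso_def
proof (intro exI conjI allI impI)
  show "taa_morphism alph1 alph2 (Fm :: 'k elt \<Rightarrow> 'k elt)"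
    unfolding taa_morphism_def
    by (auto simp: Fm_emult Fm_relabel Fm_homdeg alph1_def intro: Fm_inA)
  show "taa_morphism alph2 alph1 (id :: 'k elt \<Rightarrow> 'k elt)"
    unfolding taa_morphism_def by (auto simp: inA_def alph1_def)
  fix I and x :: "'k elt"
  assume "finite I" "inA alph1 I x"
  then show "inIdeal alph1 Rel1 (esub (id (Fm x)) x)" using GF_ideal by simp
next
  fix I and x :: "'k elt"
  assume "inIdeal alph1 Rel1 x"
  then show "inIdeal alph2 Rel2 (Fm x)" by (rule F_ideal)
next
  fix I and y :: "'k elt"
  assume "inIdeal alph2 Rel2 y"
  then show "inIdeal alph1 Rel1 (id y)" using G_ideal by simp
next
  fix I and y :: "'k elt"
  assume "inA alph2 I y"
  then have "Fm y = y" by (rule Fm_alph2)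
  then show "inIdeal alph2 Rel2 (esub (Fm (id y)) y)" by (simp add: inIdeal.zero)
qed

end
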